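(* Let $f\colon\mathbb{R}\to\mathbb{R}$ be a smooth $T$-periodic function ($T>0$). Then the equation $$\ddot x=f(t)\sin x-\cos x$$ has a $T$-periodic solution $x(t)$ such that $0<x(t)<\pi$ for all $t$.
   Context: The equation describes an inverted pendulum with a horizontally moving pivot point in a constant gravity field. *)

theory Defs
  imports "HOL-Analysis.Analysis"
begin

definition smooth_fun :: "(real \<Rightarrow> real) \<Rightarrow> bool" where
  "smooth_fun f \<longleftrightarrow> (\<forall>n. \<forall>t. ((deriv ^^ n) f) differentiable (at t))"

end

theory Submission imports Defs begin

lemma ftc_window:
  fixes k :: "real \<Rightarrow> real"
  assumes k: "continuous_on UNIV k" and T: "T \<ge> 0"
  shows "((\<lambda>t. integral {t-T..t} k) has_real_derivative (k t - k (t - T))) (at t)"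
proof -
  define a where "a = t - T - 1"
  define b where "b = t + 1"
  have D: "((\<lambda>x. integral {a..x} k) has_real_derivative k y) (at y)" if "a < y" "y < b" for y
  proof -
    have d: "((\<lambda>x. integral {a..x} k) has_real_derivative k y) (at y within {a..b})"
      by (rule integral_has_real_derivative) (use k that in \<open>auto intro: continuous_on_subset\<close>)
    have i: "y \<in> interior {a..b}" using that by simp
    have eq: "at y within {a..b} = at y" by (rule at_within_interior[OF i])
    show ?thesis using d unfolding eq .
  qed
  have d1: "((\<lambda>x. integral {a..x} k) has_real_derivative k t) (at t)"
    by (rule D) (use T in \<open>auto simp: a_def b_def\<close>)
  have d2: "((\<lambda>x. integral {a..x-T} k) has_real_derivative k (t-T) * 1) (at t)"
    by (rule DERIV_chain2[OF D]) (use T in \<open>auto simp: a_def b_def intro!: derivative_eq_intros\<close>)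
  have d3: "((\<lambda>x. integral {a..x} k - integral {a..x-T} k) has_real_derivative (k t - k (t - T))) (at t)"
    using DERIV_diff[OF d1 d2] by simp
  show ?thesis
  proof (rule has_field_derivative_transform_within_open[OF d3, of "{t-1<..<t+1}"])
    fix z assume z: "z \<in> {t-1<..<t+1}"
    have "integral {a..z-T} k + integral {z-T..z} k = integral {a..z} k"
      by (rule Henstock_Kurzweil_Integration.integral_combine) (use z T in \<open>auto simp: a_def intro!: integrable_continuous_real continuous_on_subset[OF k]\<close>)
    then show "integral {a..z} k - integral {a..z-T} k = integral {z-T..z} k" by simp
  qed auto
qed

lemma ex1: "exp(-w*t) = 1/exp(w*t::real)"
proof -
  have eq: "-w*t = -(w*t)" by simp
  show ?thesis by (simp only: eq exp_minus inverse_eq_divide)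
qed
lemma ex2: "exp(w*(t-T)) = exp(w*t)*exp(-w*T::real)"
proof -
  have eq: "w*(t-T) = w*t + (-w*T)" by (simp add: algebra_simps)
  show ?thesis by (simp only: eq exp_add)
qed
lemma ex3: "exp(-w*(t+T)) = exp(-w*T)/exp(w*t::real)"
proof -
  have eq: "-w*(t+T) = (-w*T) + -(w*t)" by (simp add: algebra_simps)
  show ?thesis by (simp only: eq exp_add exp_minus divide_inverse)
qed

definition Uf :: "real \<Rightarrow> real \<Rightarrow> (real \<Rightarrow> real) \<Rightarrow> real \<Rightarrow> real" where
  "Uf w T h t = exp (-w*t) * integral {t-T..t} (\<lambda>u. exp (w*u) * h u)"
definition Vf :: "real \<Rightarrow> real \<Rightarrow> (real \<Rightarrow> real) \<Rightarrow> real \<Rightarrow> real" where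
  "Vf w T h t = exp (w*t) * integral {t..t+T} (\<lambda>u. exp (-w*u) * h u)"

lemma cont_exp_mult: "continuous_on UNIV h \<Longrightarrow> continuous_on UNIV (\<lambda>u. exp (w*u) * (h u::real))"
  by (auto intro!: continuous_intros)

lemma U_deriv:
  assumes h: "continuous_on UNIV h" and per: "\<forall>t. h (t+T) = h t" and T: "T \<ge> 0"
  shows "(Uf w T h has_real_derivative (-w * Uf w T h t + (1 - exp(-w*T)) * h t)) (at t)"
proof -
  have J: "((\<lambda>t. integral {t-T..t} (\<lambda>u. exp(w*u)*h u)) has_real_derivative
      (exp(w*t)*h t - exp(w*(t-T))*h(t-T))) (at t)"
    using ftc_window[OF cont_exp_mult[OF h] T] by simp
  have E: "((\<lambda>t. exp(-w*t)) has_real_derivative (-w*exp(-w*t))) (at t)"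
    by (auto intro!: derivative_eq_intros)
  have e: "Uf w T h = (\<lambda>t. exp(-w*t) * integral {t-T..t} (\<lambda>u. exp(w*u)*h u))"
    by (rule ext) (simp add: Uf_def)
  have ht: "h (t-T) = h t" using per[rule_format, of "t-T"] by simp
  have x1: "exp(-w*t)*exp(w*t) = 1" by (simp add: exp_add[symmetric])
  have x2: "exp(-w*t)*exp(w*(t-T)) = exp(-w*T)" by (simp add: exp_add[symmetric] algebra_simps)
  have "(Uf w T h has_real_derivative (-w*exp(-w*t)) * integral {t-T..t} (\<lambda>u. exp(w*u)*h u)
      + (exp(w*t)*h t - exp(w*(t-T))*h(t-T)) * exp(-w*t)) (at t)"
    unfolding e by (rule DERIV_mult[OF E J])
  moreover have "(-w*exp(-w*t)) * integral {t-T..t} (\<lambda>u. exp(w*u)*h u)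
      + (exp(w*t)*h t - exp(w*(t-T))*h(t-T)) * exp(-w*t) = -w * Uf w T h t + (1 - exp(-w*T)) * h t"
    unfolding ht Uf_def ex1[of w t] ex2[of w t T] by (simp add: field_simps)
  ultimately show ?thesis by simp
qed

lemma V_deriv:
  assumes h: "continuous_on UNIV h" and per: "\<forall>t. h (t+T) = h t" and T: "T \<ge> 0"
  shows "(Vf w T h has_real_derivative (w * Vf w T h t - (1 - exp(-w*T)) * h t)) (at t)"
proof -
  have J0: "((\<lambda>x. integral {(x+T)-T..x+T} (\<lambda>u. exp(-w*u)*h u)) has_real_derivative
      (exp(-w*(t+T))*h (t+T) - exp(-w*(t+T-T))*h(t+T-T)) * 1) (at t)"
    by (rule DERIV_chain2[OF ftc_window[OF cont_exp_mult[OF h] T]]) (auto intro!: derivative_eq_intros)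
  have J: "((\<lambda>x. integral {x..x+T} (\<lambda>u. exp(-w*u)*h u)) has_real_derivative
      (exp(-w*(t+T))*h t - exp(-w*t)*h t)) (at t)"
    using J0 per by simp
  have E: "((\<lambda>t. exp(w*t)) has_real_derivative (w*exp(w*t))) (at t)"
    by (auto intro!: derivative_eq_intros)
  have e: "Vf w T h = (\<lambda>t. exp(w*t) * integral {t..t+T} (\<lambda>u. exp(-w*u)*h u))"
    by (rule ext) (simp add: Vf_def)
  have x1: "exp(w*t)*exp(-w*t) = 1" by (simp add: exp_add[symmetric])
  have x2: "exp(w*t)*exp(-w*(t+T)) = exp(-w*T)" by (simp add: exp_add[symmetric] algebra_simps)
  have "(Vf w T h has_real_derivative (w*exp(w*t)) * integral {t..t+T} (\<lambda>u. exp(-w*u)*h u)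
      + (exp(-w*(t+T))*h t - exp(-w*t)*h t) * exp(w*t)) (at t)"
    unfolding e by (rule DERIV_mult[OF E J])
  moreover have "(w*exp(w*t)) * integral {t..t+T} (\<lambda>u. exp(-w*u)*h u)
      + (exp(-w*(t+T))*h t - exp(-w*t)*h t) * exp(w*t) = w * Vf w T h t - (1 - exp(-w*T)) * h t"
    unfolding Vf_def ex1[of w t] ex3[of w t T] by (simp add: field_simps)
  ultimately show ?thesis by simp
qed

lemma U_per:
  assumes per: "\<forall>t. h (t+T) = h t"
  shows "Uf w T h (t+T) = Uf w T h t"
proof -
  have "integral {t..t+T} (\<lambda>u. exp(w*u)*h u) = integral {t-T+T..t+T} (\<lambda>u. exp(w*u)*h u)" by simp
  also have "\<dots> = integral {t-T..t} ((\<lambda>u. exp(w*u)*h u) \<circ> (+) T)"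
    by (rule integral_shift_Icc_real[symmetric])
  also have "\<dots> = integral {t-T..t} (\<lambda>u. exp(w*T) * (exp(w*u)*h u))"
  proof (rule integral_cong)
    fix x have "h (T+x) = h x" using per[rule_format, of x] by (simp add: add.commute)
    then show "((\<lambda>u. exp(w*u)*h u) \<circ> (+) T) x = exp(w*T) * (exp(w*x)*h x)"
      by (simp add: distrib_left exp_add)
  qed
  also have "\<dots> = exp(w*T) * integral {t-T..t} (\<lambda>u. exp(w*u)*h u)" by simp
  finally have I: "integral {t..t+T} (\<lambda>u. exp(w*u)*h u) = exp(w*T) * integral {t-T..t} (\<lambda>u. exp(w*u)*h u)" .
  have x: "exp(-w*(t+T)) * exp(w*T) = exp(-w*t)" by (simp add: exp_add[symmetric] algebra_simps)
  have "Uf w T h (t+T) = exp(-w*(t+T)) * integral {t..t+T} (\<lambda>u. exp(w*u)*h u)"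
    unfolding Uf_def by simp
  also have "\<dots> = (exp(-w*(t+T)) * exp(w*T)) * integral {t-T..t} (\<lambda>u. exp(w*u)*h u)"
    unfolding I by (simp only: mult.assoc)
  also have "\<dots> = Uf w T h t" unfolding x Uf_def ..
  finally show ?thesis .
qed

lemma V_per:
  assumes per: "\<forall>t. h (t+T) = h t"
  shows "Vf w T h (t+T) = Vf w T h t"
proof -
  have "integral {t+T..t+T+T} (\<lambda>u. exp(-w*u)*h u) = integral {t..t+T} ((\<lambda>u. exp(-w*u)*h u) \<circ> (+) T)"
    by (rule integral_shift_Icc_real[where a=t and b="t+T" and c=T, symmetric])
  also have "\<dots> = integral {t..t+T} (\<lambda>u. exp(-w*T) * (exp(-w*u)*h u))"
  proof (rule integral_cong)
    fix x have hT: "h (T+x) = h x" using per[rule_format, of x] by (simp add: add.commute)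
    have eq: "-w*(T+x) = -w*T + -w*x" by (simp add: algebra_simps)
    show "((\<lambda>u. exp(-w*u)*h u) \<circ> (+) T) x = exp(-w*T) * (exp(-w*x)*h x)"
      by (simp only: o_def eq exp_add hT mult.assoc)
  qed
  also have "\<dots> = exp(-w*T) * integral {t..t+T} (\<lambda>u. exp(-w*u)*h u)" by simp
  finally have I: "integral {t+T..t+T+T} (\<lambda>u. exp(-w*u)*h u) = exp(-w*T) * integral {t..t+T} (\<lambda>u. exp(-w*u)*h u)" .
  have x: "exp(w*(t+T)) * exp(-w*T) = exp(w*t)" by (simp add: exp_add[symmetric] algebra_simps)
  have "Vf w T h (t+T) = exp(w*(t+T)) * integral {t+T..t+T+T} (\<lambda>u. exp(-w*u)*h u)"
    unfolding Vf_def by simp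
  also have "\<dots> = (exp(w*(t+T)) * exp(-w*T)) * integral {t..t+T} (\<lambda>u. exp(-w*u)*h u)"
    unfolding I by (simp only: mult.assoc)
  also have "\<dots> = Vf w T h t" unfolding x Vf_def ..
  finally show ?thesis .
qed

lemma U_mono:
  assumes h: "continuous_on UNIV h" and g: "continuous_on UNIV g" and le: "\<And>u. h u \<le> g u"
  shows "Uf w T h t \<le> Uf w T g t"
  unfolding Uf_def
  by (intro mult_left_mono integral_le integrable_continuous_real continuous_on_subset[OF cont_exp_mult[OF h]]
      continuous_on_subset[OF cont_exp_mult[OF g]] le) (auto intro: le)

lemma V_mono:
  assumes h: "continuous_on UNIV h" and g: "continuous_on UNIV g" and le: "\<And>u. h u \<le> g u"
  shows "Vf w T h t \<le> Vf w T g t"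
  unfolding Vf_def
  by (intro mult_left_mono integral_le integrable_continuous_real continuous_on_subset[OF cont_exp_mult[OF h]]
      continuous_on_subset[OF cont_exp_mult[OF g]] le) (auto intro: le)

lemma int_exp:
  fixes a b w :: real
  assumes "a \<le> b" "w \<noteq> 0"
  shows "integral {a..b} (\<lambda>u. exp(w*u)) = (exp(w*b) - exp(w*a)) / w"
proof -
  have "((\<lambda>u. exp(w*u)) has_integral ((\<lambda>u. exp(w*u)/w) b - (\<lambda>u. exp(w*u)/w) a)) {a..b}"
    by (rule fundamental_theorem_of_calculus[OF assms(1)])
       (use assms(2) in \<open>auto intro!: derivative_eq_intros simp: has_real_derivative_iff_has_vector_derivative[symmetric]\<close>)
  then show ?thesis by (simp add: integral_unique diff_divide_distrib)
qed

lemma U_const: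
  assumes "T \<ge> 0" "w > 0"
  shows "Uf w T (\<lambda>_. a) t = a * (1 - exp(-w*T)) / w"
proof -
  have "integral {t-T..t} (\<lambda>u. exp(w*u) * a) = a * ((exp(w*t) - exp(w*(t-T))) / w)"
    using int_exp[of "t-T" t w] assms by simp
  moreover have "exp(-w*t)*exp(w*t) = 1" by (simp add: exp_add[symmetric])
  moreover have "exp(-w*t)*exp(w*(t-T)) = exp(-w*T)" by (simp add: exp_add[symmetric] algebra_simps)
  ultimately show ?thesis unfolding Uf_def by (simp add: field_simps)
qed

lemma V_const:
  assumes "T \<ge> 0" "w > 0"
  shows "Vf w T (\<lambda>_. a) t = a * (1 - exp(-w*T)) / w"
proof -
  have "integral {t..t+T} (\<lambda>u. exp(-w*u) * a) = a * ((exp(-w*(t+T)) - exp(-w*t)) / (-w))"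
    using int_exp[of t "t+T" "-w"] assms by simp
  then show ?thesis unfolding Vf_def ex1[of w t] ex3[of w t T] using assms by (simp add: field_simps)
qed

definition Sf :: "real \<Rightarrow> real \<Rightarrow> (real \<Rightarrow> real) \<Rightarrow> real \<Rightarrow> real" where
  "Sf w T h t = (Uf w T h t + Vf w T h t) / (2*w*(1 - exp(-w*T)))"
definition Sd :: "real \<Rightarrow> real \<Rightarrow> (real \<Rightarrow> real) \<Rightarrow> real \<Rightarrow> real" where
  "Sd w T h t = (Vf w T h t - Uf w T h t) / (2*(1 - exp(-w*T)))"

lemma c_pos: "T > 0 \<Longrightarrow> w > 0 \<Longrightarrow> 1 - exp(-w*T) > (0::real)"
  by simp

lemma S_deriv:
  assumes h: "continuous_on UNIV h" and per: "\<forall>t. h (t+T) = h t" and T: "T > 0" and w: "w > 0"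
  shows "(Sf w T h has_real_derivative Sd w T h t) (at t)"
    and "(Sd w T h has_real_derivative (w^2 * Sf w T h t - h t)) (at t)"
proof -
  define c where "c = 1 - exp(-w*T)"
  have c: "c > 0" using c_pos[OF T w] by (simp add: c_def)
  have dU: "(Uf w T h has_real_derivative (-w * Uf w T h t + c * h t)) (at t)"
    using U_deriv[OF h per] T by (simp add: c_def)
  have dV: "(Vf w T h has_real_derivative (w * Vf w T h t - c * h t)) (at t)"
    using V_deriv[OF h per] T by (simp add: c_def)
  have e1: "Sf w T h = (\<lambda>t. (Uf w T h t + Vf w T h t) / (2*w*c))"
    by (rule ext) (simp add: Sf_def c_def)
  have e2: "Sd w T h = (\<lambda>t. (Vf w T h t - Uf w T h t) / (2*c))"
    by (rule ext) (simp add: Sd_def c_def)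
  have "(Sf w T h has_real_derivative ((-w * Uf w T h t + c * h t) + (w * Vf w T h t - c * h t)) / (2*w*c)) (at t)"
    unfolding e1 by (intro DERIV_cdivide DERIV_add dU dV)
  moreover have "((-w * Uf w T h t + c * h t) + (w * Vf w T h t - c * h t)) / (2*w*c) = Sd w T h t"
    unfolding e2[THEN fun_cong] using w c by (simp add: field_simps)
  ultimately show "(Sf w T h has_real_derivative Sd w T h t) (at t)" by simp
  have "(Sd w T h has_real_derivative ((w * Vf w T h t - c * h t) - (-w * Uf w T h t + c * h t)) / (2*c)) (at t)"
    unfolding e2 by (intro DERIV_cdivide DERIV_diff dU dV)
  moreover have "((w * Vf w T h t - c * h t) - (-w * Uf w T h t + c * h t)) / (2*c) = w^2 * Sf w T h t - h t"
    unfolding e1[THEN fun_cong] using w c by (simp add: field_simps power2_eq_square)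
  ultimately show "(Sd w T h has_real_derivative (w^2 * Sf w T h t - h t)) (at t)" by simp
qed

lemma S_per: "\<forall>t. h (t+T) = h t \<Longrightarrow> Sf w T h (t+T) = Sf w T h t"
  unfolding Sf_def by (simp add: U_per V_per)

lemma S_mono:
  assumes h: "continuous_on UNIV h" and g: "continuous_on UNIV g" and le: "\<And>u. h u \<le> g u"
    and T: "T > 0" and w: "w > 0"
  shows "Sf w T h t \<le> Sf w T g t"
  unfolding Sf_def
  by (intro divide_right_mono add_mono U_mono V_mono h g le) (use c_pos[OF T w] w T in simp)

lemma S_const:
  assumes T: "T > 0" and w: "w > 0"
  shows "Sf w T (\<lambda>_. a) t = a / w^2"
proof -
  define q where "q = exp(-w*T)"
  have c: "1 - q > 0" using c_pos[OF T w] by (simp add: q_def)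
  have "Sf w T (\<lambda>_. a) t = (a*(1-q)/w + a*(1-q)/w) / (2*w*(1-q))"
    unfolding Sf_def U_const[OF less_imp_le[OF T] w] V_const[OF less_imp_le[OF T] w] q_def ..
  also have "\<dots> = a / w^2" using c w by (simp add: field_simps power2_eq_square)
  finally show ?thesis .
qed

lemma Sd_bound:
  assumes h: "continuous_on UNIV h" and H: "\<And>u. \<bar>h u\<bar> \<le> H" and T: "T > 0" and w: "w > 0"
  shows "\<bar>Sd w T h t\<bar> \<le> H / w"
proof -
  define c where "c = 1 - exp(-w*T)"
  have c: "c > 0" using c_pos[OF T w] by (simp add: c_def)
  have hc: "continuous_on UNIV (\<lambda>_. a::real)" for a by simp
  have Hb: "-H \<le> h u" "h u \<le> H" for u using H[of u] by (auto simp: abs_le_iff)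
  have l1: "Uf w T (\<lambda>_. -H) t \<le> Uf w T h t" by (rule U_mono[OF hc h]) (simp add: Hb)
  have l2: "Uf w T h t \<le> Uf w T (\<lambda>_. H) t" by (rule U_mono[OF h hc]) (simp add: Hb)
  have l3: "Vf w T (\<lambda>_. -H) t \<le> Vf w T h t" by (rule V_mono[OF hc h]) (simp add: Hb)
  have l4: "Vf w T h t \<le> Vf w T (\<lambda>_. H) t" by (rule V_mono[OF h hc]) (simp add: Hb)
  note cs = U_const[OF less_imp_le[OF T] w] V_const[OF less_imp_le[OF T] w]
  have "\<bar>Vf w T h t - Uf w T h t\<bar> \<le> 2 * (H * c / w)"
    using l1 l2 l3 l4 unfolding cs c_def[symmetric] by (simp add: abs_le_iff)
  then have "\<bar>Vf w T h t - Uf w T h t\<bar> / (2*c) \<le> 2 * (H * c / w) / (2*c)"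
    using c by (intro divide_right_mono) auto
  also have "\<dots> = H / w" using c by (simp add: field_simps)
  finally show ?thesis unfolding Sd_def c_def[symmetric] using c by (simp add: abs_divide)
qed

lemma S_lip:
  assumes h: "continuous_on UNIV h" and per: "\<forall>t. h (t+T) = h t"
    and H: "\<And>u. \<bar>h u\<bar> \<le> H" and T: "T > 0" and w: "w > 0"
  shows "\<bar>Sf w T h a - Sf w T h b\<bar> \<le> H / w * \<bar>a - b\<bar>"
proof -
  have *: "\<bar>Sf w T h y - Sf w T h x\<bar> \<le> H / w * \<bar>y - x\<bar>" if xy: "x < y" for x y
  proof -
    obtain z where "Sf w T h y - Sf w T h x = (y - x) * Sd w T h z"
      using MVT2[OF xy S_deriv(1)[OF h per T w]] by blast
    then have "\<bar>Sf w T h y - Sf w T h x\<bar> = \<bar>y - x\<bar> * \<bar>Sd w T h z\<bar>" by (simp add: abs_mult)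
    also have "\<dots> \<le> \<bar>y - x\<bar> * (H / w)" by (intro mult_left_mono Sd_bound[OF h H T w]) auto
    finally show ?thesis by (simp add: mult.commute)
  qed
  show ?thesis
  proof (cases a b rule: linorder_cases)
    case less then show ?thesis using *[of a b] by (simp add: abs_minus_commute)
  next
    case greater then show ?thesis using *[of b a] by (simp add: abs_minus_commute)
  qed simp
qed

lemma U_tendsto:
  assumes hn: "\<And>n. continuous_on UNIV (hn n)" and hs: "continuous_on UNIV hs"
    and H: "\<And>n u. \<bar>hn n u\<bar> \<le> H" and conv: "\<And>u. (\<lambda>n. hn n u) \<longlonglongrightarrow> hs u"
  shows "(\<lambda>n. Uf w T (hn n) t) \<longlonglongrightarrow> Uf w T hs t"
proof -
  have "(\<lambda>k. integral {t-T..t} (\<lambda>u. exp(w*u) * hn k u)) \<longlonglongrightarrow> integral {t-T..t} (\<lambda>u. exp(w*u) * hs u)"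
  proof (rule dominated_convergence(2)[where h="\<lambda>u. exp(w*u) * H"])
    show "(\<lambda>u. exp(w*u) * hn k u) integrable_on {t-T..t}" for k
      by (intro integrable_continuous_real continuous_on_subset[OF cont_exp_mult[OF hn]]) auto
    show "(\<lambda>u. exp(w*u) * H) integrable_on {t-T..t}"
      by (intro integrable_continuous_real continuous_intros)
    show "norm (exp(w*u) * hn k u) \<le> exp(w*u) * H" if "u \<in> {t-T..t}" for k u
      using H[of k u] by (simp add: abs_mult)
    show "(\<lambda>k. exp(w*u) * hn k u) \<longlonglongrightarrow> exp(w*u) * hs u" if "u \<in> {t-T..t}" for u
      by (intro tendsto_mult_left conv)
  qed
  then show ?thesis unfolding Uf_def by (rule tendsto_mult_left)
qed

lemma V_tendsto:
  assumes hn: "\<And>n. continuous_on UNIV (hn n)" and hs: "continuous_on UNIV hs"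
    and H: "\<And>n u. \<bar>hn n u\<bar> \<le> H" and conv: "\<And>u. (\<lambda>n. hn n u) \<longlonglongrightarrow> hs u"
  shows "(\<lambda>n. Vf w T (hn n) t) \<longlonglongrightarrow> Vf w T hs t"
proof -
  have "(\<lambda>k. integral {t..t+T} (\<lambda>u. exp(-w*u) * hn k u)) \<longlonglongrightarrow> integral {t..t+T} (\<lambda>u. exp(-w*u) * hs u)"
  proof (rule dominated_convergence(2)[where h="\<lambda>u. exp(-w*u) * H"])
    show "(\<lambda>u. exp(-w*u) * hn k u) integrable_on {t..t+T}" for k
      by (intro integrable_continuous_real continuous_on_subset[OF cont_exp_mult[OF hn]]) auto
    show "(\<lambda>u. exp(-w*u) * H) integrable_on {t..t+T}"
      by (intro integrable_continuous_real continuous_intros)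
    show "norm (exp(-w*u) * hn k u) \<le> exp(-w*u) * H" if "u \<in> {t..t+T}" for k u
      using H[of k u] by (simp add: abs_mult)
    show "(\<lambda>k. exp(-w*u) * hn k u) \<longlonglongrightarrow> exp(-w*u) * hs u" if "u \<in> {t..t+T}" for u
      by (intro tendsto_mult_left conv)
  qed
  then show ?thesis unfolding Vf_def by (rule tendsto_mult_left)
qed

lemma S_tendsto:
  assumes hn: "\<And>n. continuous_on UNIV (hn n)" and hs: "continuous_on UNIV hs"
    and H: "\<And>n u. \<bar>hn n u\<bar> \<le> H" and conv: "\<And>u. (\<lambda>n. hn n u) \<longlonglongrightarrow> hs u"
    and T: "T > 0" and w: "w > 0"
  shows "(\<lambda>n. Sf w T (hn n) t) \<longlonglongrightarrow> Sf w T hs t"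
  unfolding Sf_def
  by (intro tendsto_divide tendsto_add U_tendsto[OF hn hs H conv] V_tendsto[OF hn hs H conv] tendsto_const)
     (use c_pos[OF T w] w T in simp)

lemma per_nat:
  assumes per: "\<forall>t. f (t+T) = f t"
  shows "f (t + real n * T) = f t"
proof (induction n)
  case (Suc n)
  have "f (t + real (Suc n) * T) = f ((t + real n * T) + T)" by (simp add: algebra_simps)
  also have "\<dots> = f (t + real n * T)" using per by blast
  finally show ?case using Suc by simp
qed simp

lemma per_bounded:
  fixes f :: "real \<Rightarrow> real"
  assumes fc: "continuous_on UNIV f" and T: "T > 0" and per: "\<forall>t. f (t+T) = f t"
  shows "\<exists>B\<ge>0. \<forall>t. \<bar>f t\<bar> \<le> B"
proof -
  have "bounded (f ` {0..T})"
    by (intro compact_imp_bounded compact_continuous_image continuous_on_subset[OF fc]) auto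
  then obtain B where B: "\<forall>x\<in>{0..T}. \<bar>f x\<bar> \<le> B"
    unfolding bounded_iff by auto
  have "\<bar>f t\<bar> \<le> B" for t
  proof -
    define k where "k = \<lfloor>t / T\<rfloor>"
    define s where "s = t - of_int k * T"
    have s0: "0 \<le> s" using floor_divide_lower[OF T, of t] by (simp add: s_def k_def)
    have s1: "s \<le> T" using floor_divide_upper[OF T, of t] by (simp add: s_def k_def algebra_simps)
    have "f t = f s"
    proof (cases "k \<ge> 0")
      case True
      then have "t = s + real (nat k) * T" by (simp add: s_def)
      then show ?thesis using per_nat[OF per, of s "nat k"] by simp
    next
      case False
      then have "s = t + real (nat (-k)) * T" by (simp add: s_def)
      then show ?thesis using per_nat[OF per, of t "nat (-k)"] by simp
    qed
    then show ?thesis using B s0 s1 by auto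
  qed
  moreover have "B \<ge> 0" using B T by force
  ultimately show ?thesis by blast
qed

lemma eps_facts:
  fixes B :: real
  assumes B: "B \<ge> 0"
  defines "\<epsilon> \<equiv> 1 / (2*(B+1))"
  shows "0 < \<epsilon>" "\<epsilon> < pi - \<epsilon>" "\<And>y. \<bar>y\<bar> \<le> B \<Longrightarrow> \<bar>y * sin \<epsilon>\<bar> \<le> cos \<epsilon>"
proof -
  show e0: "0 < \<epsilon>" using B by (simp add: \<epsilon>_def)
  have e1: "\<epsilon> \<le> 1/2" using B by (simp add: \<epsilon>_def field_simps)
  then show "\<epsilon> < pi - \<epsilon>" using pi_gt3 by linarith
  have sl: "sin \<epsilon> \<le> \<epsilon>" using sin_x_le_x e0 by simp
  have sp: "0 < sin \<epsilon>" using e0 e1 pi_gt3 by (intro sin_gt_zero) auto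
  have cp: "0 < cos \<epsilon>" using e0 e1 pi_gt3 by (intro cos_gt_zero) auto
  have "(cos \<epsilon>)^2 = 1 - (sin \<epsilon>)^2" by (simp add: cos_squared_eq)
  moreover have "(sin \<epsilon>)^2 \<le> 1/4"
  proof -
    have "sin \<epsilon> \<le> 1/2" using sl e1 by linarith
    then have "(sin \<epsilon>)^2 \<le> (1/2)^2" using sp by (intro power_mono) auto
    moreover have "(1/2::real)^2 = 1/4" by (simp add: power2_eq_square)
    ultimately show ?thesis by linarith
  qed
  moreover have q: "(1/2::real)^2 = 1/4" by (simp add: power2_eq_square)
  ultimately have "(1/2)^2 \<le> (cos \<epsilon>)^2" by linarith
  then have c2: "1/2 \<le> cos \<epsilon>" using cp by (simp add: power2_le_iff_abs_le abs_of_pos)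
  have Be: "B * \<epsilon> \<le> 1/2" using B by (simp add: \<epsilon>_def field_simps)
  show "\<bar>y * sin \<epsilon>\<bar> \<le> cos \<epsilon>" if "\<bar>y\<bar> \<le> B" for y
  proof -
    have "\<bar>y * sin \<epsilon>\<bar> = \<bar>y\<bar> * sin \<epsilon>" using sp by (simp add: abs_mult)
    also have "\<dots> \<le> B * \<epsilon>" using that sl sp B by (intro mult_mono) auto
    finally show ?thesis using Be c2 by linarith
  qed
qed

theorem lemma3p6:
  fixes f :: "real \<Rightarrow> real" and T :: real
  assumes "T > 0"
    and "smooth_fun f"
    and "\<forall>t. f (t + T) = f t"
  shows "\<exists>x x' :: real \<Rightarrow> real.
           (\<forall>t. (x has_real_derivative x' t) (at t)) \<and>
           (\<forall>t. (x' has_real_derivative (f t * sin (x t) - cos (x t))) (at t)) \<and>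
           (\<forall>t. x (t + T) = x t) \<and>
           (\<forall>t. 0 < x t \<and> x t < pi)"
proof -
  note T = assms(1) and per = assms(3)
  have "f differentiable (at t)" for t
    using assms(2) unfolding smooth_fun_def by (metis funpow_0)
  then have fc: "continuous_on UNIV f"
    by (intro continuous_at_imp_continuous_on) (auto intro: differentiable_imp_continuous_within)
  obtain B where B0: "B \<ge> 0" and B: "\<And>t. \<bar>f t\<bar> \<le> B"
    using per_bounded[OF fc T per] by blast
  define \<epsilon> where "\<epsilon> = 1 / (2*(B+1))"
  have e0: "0 < \<epsilon>" and e1: "\<epsilon> < pi - \<epsilon>" and eB: "\<And>t. \<bar>f t * sin \<epsilon>\<bar> \<le> cos \<epsilon>"
    using eps_facts[OF B0] B unfolding \<epsilon>_def by auto
  define M where "M = B + 2"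
  define w where "w = sqrt M"
  have M0: "M > 0" using B0 by (simp add: M_def)
  have w0: "w > 0" using M0 by (simp add: w_def)
  have w2: "w^2 = M" using M0 by (simp add: w_def)
  define F where "F = (\<lambda>t y. M * y - (f t * sin y - cos y))"
  define Phi where "Phi = (\<lambda>x::real\<Rightarrow>real. Sf w T (\<lambda>t. F t (x t)))"
  define Good where "Good = (\<lambda>x::real\<Rightarrow>real. continuous_on UNIV x \<and> (\<forall>t. x (t+T) = x t) \<and>
      (\<forall>t. \<epsilon> \<le> x t \<and> x t \<le> pi - \<epsilon>))"
  define Hb where "Hb = M * pi + B + 1"
  have Fc: "continuous_on UNIV (\<lambda>t. F t (x t))" if "continuous_on UNIV x" for x
    unfolding F_def by (intro continuous_intros fc that)
  have Fper: "\<forall>t. F (t+T) (x (t+T)) = F t (x t)" if "\<forall>t. x (t+T) = x t" for x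
    using that per by (simp add: F_def)
  have Fmono: "F t a \<le> F t b" if "a \<le> b" for t a b
  proof (rule DERIV_nonneg_imp_nondecreasing[OF that])
    fix y
    have d: "((\<lambda>y. F t y) has_real_derivative (M - (f t * cos y + sin y))) (at y)"
      unfolding F_def by (auto intro!: derivative_eq_intros)
    have c: "f t * cos y \<le> B"
    proof -
      have "\<bar>f t * cos y\<bar> \<le> B * 1" unfolding abs_mult using B[of t] B0 by (intro mult_mono) auto
      then show ?thesis by linarith
    qed
    have s: "sin y \<le> 1" by (rule sin_le_one)
    have "0 \<le> M - (f t * cos y + sin y)" unfolding M_def using c s by linarith
    then show "\<exists>d. ((\<lambda>y. F t y) has_real_derivative d) (at y) \<and> 0 \<le> d" using d by blast
  qed
  have Fbound: "\<bar>F t y\<bar> \<le> Hb" if "0 \<le> y" "y \<le> pi" for t y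
  proof -
    have "\<bar>f t * sin y\<bar> \<le> B * 1" unfolding abs_mult using B[of t] B0 by (intro mult_mono) auto
    moreover have "\<bar>M * y\<bar> \<le> M * pi" using that M0 by (simp add: abs_mult)
    moreover have "\<bar>cos y\<bar> \<le> 1" by simp
    ultimately show ?thesis unfolding F_def Hb_def by linarith
  qed
  have Phi_mono: "Phi x t \<le> Phi y t" if "continuous_on UNIV x" "continuous_on UNIV y" "\<And>t. x t \<le> y t" for x y t
    unfolding Phi_def by (rule S_mono[OF Fc[OF that(1)] Fc[OF that(2)] Fmono[OF that(3)] T w0])
  have Phi_lo: "\<epsilon> \<le> Phi (\<lambda>_. \<epsilon>) t" for t
  proof -
    have "F u \<epsilon> \<ge> M * \<epsilon>" for u
    proof -
      have "f u * sin \<epsilon> \<le> cos \<epsilon>" using eB[of u] by linarith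
      then show ?thesis by (simp add: F_def)
    qed
    moreover have c1: "continuous_on UNIV (\<lambda>t. F t \<epsilon>)" using Fc[of "\<lambda>_. \<epsilon>"] by simp
    ultimately have "Sf w T (\<lambda>_. M * \<epsilon>) t \<le> Phi (\<lambda>_. \<epsilon>) t"
      unfolding Phi_def by (intro S_mono[OF continuous_on_const c1 _ T w0]) auto
    moreover have "Sf w T (\<lambda>_. M * \<epsilon>) t = \<epsilon>" using S_const[OF T w0] w2 M0 by simp
    ultimately show ?thesis by simp
  qed
  have Phi_hi: "Phi (\<lambda>_. pi - \<epsilon>) t \<le> pi - \<epsilon>" for t
  proof -
    have "F u (pi - \<epsilon>) \<le> M * (pi - \<epsilon>)" for u
    proof -
      have "- (f u * sin \<epsilon>) \<le> cos \<epsilon>" using eB[of u] by linarith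
      then show ?thesis by (simp add: F_def)
    qed
    moreover have c1: "continuous_on UNIV (\<lambda>t. F t (pi - \<epsilon>))" using Fc[of "\<lambda>_. pi - \<epsilon>"] by simp
    ultimately have "Phi (\<lambda>_. pi - \<epsilon>) t \<le> Sf w T (\<lambda>_. M * (pi - \<epsilon>)) t"
      unfolding Phi_def by (intro S_mono[OF c1 continuous_on_const _ T w0]) auto
    moreover have "Sf w T (\<lambda>_. M * (pi - \<epsilon>)) t = pi - \<epsilon>" using S_const[OF T w0] w2 M0 by simp
    ultimately show ?thesis by simp
  qed
  have Phi_deriv1: "(Phi x has_real_derivative Sd w T (\<lambda>t. F t (x t)) t) (at t)"
    if G: "Good x" for x t
  proof -
    have c: "continuous_on UNIV x" and p: "\<forall>t. x (t+T) = x t" using G unfolding Good_def by blast+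
    show ?thesis unfolding Phi_def by (rule S_deriv(1)[OF Fc[OF c] Fper[OF p] T w0])
  qed
  have Phi_deriv2: "(Sd w T (\<lambda>t. F t (x t)) has_real_derivative (w^2 * Phi x t - F t (x t))) (at t)"
    if G: "Good x" for x t
  proof -
    have c: "continuous_on UNIV x" and p: "\<forall>t. x (t+T) = x t" using G unfolding Good_def by blast+
    show ?thesis unfolding Phi_def by (rule S_deriv(2)[OF Fc[OF c] Fper[OF p] T w0])
  qed
  have Phi_bnd: "\<bar>F t (x t)\<bar> \<le> Hb" if "Good x" for x t
  proof -
    have "\<epsilon> \<le> x t \<and> x t \<le> pi - \<epsilon>" using that unfolding Good_def by blast
    then have a: "0 \<le> x t" "x t \<le> pi" using e0 by linarith+
    show ?thesis by (rule Fbound[OF a])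
  qed
  have Good_Phi: "Good (Phi x)" if G: "Good x" for x
  proof -
    have c: "continuous_on UNIV (Phi x)"
      by (intro continuous_at_imp_continuous_on ballI DERIV_isCont[OF Phi_deriv1[OF G]])
    have xp: "\<forall>t. x (t+T) = x t" using G unfolding Good_def by blast
    have p: "\<forall>t. Phi x (t+T) = Phi x t"
      unfolding Phi_def by (intro allI S_per[OF Fper[OF xp]])
    have "\<epsilon> \<le> Phi x t" for t
    proof -
      have "Phi (\<lambda>_. \<epsilon>) t \<le> Phi x t" using G unfolding Good_def by (intro Phi_mono) auto
      then show ?thesis using Phi_lo[of t] by linarith
    qed
    moreover have "Phi x t \<le> pi - \<epsilon>" for t
    proof -
      have "Phi x t \<le> Phi (\<lambda>_. pi - \<epsilon>) t" using G unfolding Good_def by (intro Phi_mono) auto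
      then show ?thesis using Phi_hi[of t] by linarith
    qed
    ultimately show ?thesis using c p unfolding Good_def by auto
  qed
  define xs where "xs = (\<lambda>n. (Phi ^^ n) (\<lambda>_. \<epsilon>))"
  have xs0: "xs 0 = (\<lambda>_. \<epsilon>)" and xsS: "xs (Suc n) = Phi (xs n)" for n
    by (simp_all add: xs_def)
  have ind: "Good (xs n) \<and> (\<forall>t. xs n t \<le> xs (Suc n) t)" for n
  proof (induction n)
    case 0
    have "Good (\<lambda>_. \<epsilon>)" using e0 e1 unfolding Good_def by auto
    then show ?case using Phi_lo by (simp add: xs0 xsS)
  next
    case (Suc n)
    have Gn: "Good (xs n)" and le: "\<And>t. xs n t \<le> xs (Suc n) t" using Suc.IH by auto
    have G: "Good (xs (Suc n))" unfolding xsS by (rule Good_Phi[OF Gn])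
    have c1: "continuous_on UNIV (xs n)" using Gn unfolding Good_def by blast
    have c2: "continuous_on UNIV (xs (Suc n))" using G unfolding Good_def by blast
    have "xs (Suc n) t \<le> xs (Suc (Suc n)) t" for t
      unfolding xsS[of "Suc n"] xsS[of n] using Phi_mono[OF c1 c2 le] unfolding xsS[of n] .
    then show ?case using G by simp
  qed
  have Gxs: "Good (xs n)" for n using ind by blast
  have inc: "incseq (\<lambda>n. xs n t)" for t using ind by (intro incseq_SucI) blast
  have ub: "xs n t \<le> pi - \<epsilon>" and lb: "\<epsilon> \<le> xs n t" for n t using Gxs[of n] unfolding Good_def by auto
  define xl where "xl = (\<lambda>t. lim (\<lambda>n. xs n t))"
  have conv: "(\<lambda>n. xs n t) \<longlonglongrightarrow> xl t" for t
  proof -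
    obtain L where "(\<lambda>n. xs n t) \<longlonglongrightarrow> L" using incseq_convergent[OF inc, of t "pi - \<epsilon>"] ub by blast
    then show ?thesis unfolding xl_def using convergent_LIMSEQ_iff convergentI by blast
  qed
  have xl_lb: "\<epsilon> \<le> xl t" for t by (rule LIMSEQ_le_const[OF conv]) (use lb in blast)
  have xl_ub: "xl t \<le> pi - \<epsilon>" for t by (rule LIMSEQ_le_const2[OF conv]) (use ub in blast)
  have xl_per: "xl (t+T) = xl t" for t
  proof -
    have "xs n (t+T) = xs n t" for n using Gxs[of n] unfolding Good_def by blast
    then have "(\<lambda>n. xs n (t+T)) \<longlonglongrightarrow> xl t" using conv[of t] by simp
    then show ?thesis by (rule LIMSEQ_unique[OF conv[of "t+T"]])
  qed
  have lipn: "\<bar>xs (Suc n) a - xs (Suc n) b\<bar> \<le> Hb / w * \<bar>a - b\<bar>" for n a b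
  proof -
    have Gn: "Good (xs n)" by (rule Gxs)
    have c: "continuous_on UNIV (xs n)" and p: "\<forall>t. xs n (t+T) = xs n t"
      using Gn unfolding Good_def by blast+
    have "\<bar>Sf w T (\<lambda>t. F t (xs n t)) a - Sf w T (\<lambda>t. F t (xs n t)) b\<bar> \<le> Hb / w * \<bar>a - b\<bar>"
      by (rule S_lip[OF Fc[OF c] Fper[OF p] Phi_bnd[OF Gn] T w0])
    then show ?thesis by (simp add: xsS Phi_def)
  qed
  have lip: "\<bar>xl a - xl b\<bar> \<le> Hb / w * \<bar>a - b\<bar>" for a b
  proof (rule LIMSEQ_le_const2)
    show "(\<lambda>n. \<bar>xs (Suc n) a - xs (Suc n) b\<bar>) \<longlonglongrightarrow> \<bar>xl a - xl b\<bar>"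
      by (intro tendsto_rabs tendsto_diff LIMSEQ_Suc[OF conv])
  qed (use lipn in blast)
  have Mp: "M * pi > 0" using M0 pi_gt_zero by (rule mult_pos_pos)
  have HbP: "Hb > 0" unfolding Hb_def using Mp B0 by linarith
  have Hb0: "Hb / w \<ge> 0" by (rule divide_nonneg_pos) (use HbP w0 in auto)
  have "lipschitz_on (Hb / w) UNIV xl"
  proof (rule lipschitz_onI)
    show "dist (xl x) (xl y) \<le> Hb / w * dist x y" for x y
      using lip[of x y] by (simp add: dist_real_def)
  qed (rule Hb0)
  then have xl_cont: "continuous_on UNIV xl" by (rule lipschitz_on_continuous_on)
  have Gxl: "Good xl" unfolding Good_def using xl_cont xl_per xl_lb xl_ub by auto
  have fxp: "Phi xl t = xl t" for t
  proof -
    have "(\<lambda>n. Phi (xs n) t) \<longlonglongrightarrow> Phi xl t"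
      unfolding Phi_def
    proof (rule S_tendsto[OF _ _ _ _ T w0])
      show "continuous_on UNIV (\<lambda>t. F t (xs n t))" for n using Gxs[of n] Fc unfolding Good_def by blast
      show "continuous_on UNIV (\<lambda>t. F t (xl t))" using Fc xl_cont by blast
      show "\<bar>F u (xs n u)\<bar> \<le> Hb" for n u using Phi_bnd[OF Gxs[of n]] .
      show "(\<lambda>n. F u (xs n u)) \<longlonglongrightarrow> F u (xl u)" for u
      proof -
        have cu: "(\<lambda>n. xs n u) \<longlonglongrightarrow> xl u" by (rule conv)
        show ?thesis unfolding F_def
          by (intro tendsto_diff tendsto_mult tendsto_const tendsto_sin tendsto_cos cu)
      qed
    qed
    moreover have "(\<lambda>n. Phi (xs n) t) \<longlonglongrightarrow> xl t"
      using LIMSEQ_Suc[OF conv[of t]] by (simp add: xsS)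
    ultimately show ?thesis using LIMSEQ_unique by blast
  qed
  have xl_eq: "Phi xl = xl" using fxp by auto
  have d1: "\<forall>t. (xl has_real_derivative Sd w T (\<lambda>t. F t (xl t)) t) (at t)"
  proof
    fix t show "(xl has_real_derivative Sd w T (\<lambda>t. F t (xl t)) t) (at t)"
      using Phi_deriv1[OF Gxl, of t] unfolding xl_eq .
  qed
  have d2: "\<forall>t. (Sd w T (\<lambda>t. F t (xl t)) has_real_derivative (f t * sin (xl t) - cos (xl t))) (at t)"
  proof
    fix t
    have "(Sd w T (\<lambda>t. F t (xl t)) has_real_derivative (w^2 * Phi xl t - F t (xl t))) (at t)"
      by (rule Phi_deriv2[OF Gxl])
    moreover have "w^2 * Phi xl t - F t (xl t) = f t * sin (xl t) - cos (xl t)"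
      unfolding fxp w2 F_def by simp
    ultimately show "(Sd w T (\<lambda>t. F t (xl t)) has_real_derivative (f t * sin (xl t) - cos (xl t))) (at t)"
      by simp
  qed
  have pp: "\<forall>t. xl (t + T) = xl t" using xl_per by blast
  have bd: "\<forall>t. 0 < xl t \<and> xl t < pi"
  proof
    fix t show "0 < xl t \<and> xl t < pi" using xl_lb[of t] xl_ub[of t] e0 by linarith
  qed
  show ?thesis
    by (intro exI[of _ xl] exI[of _ "Sd w T (\<lambda>t. F t (xl t))"] conjI d1 d2 pp bd)
qed

end
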